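(* Let $q$ be a power of $2$. In $\mathrm{AG}(3,q^2)\subset\mathrm{PG}(3,q^2)$, with affine coordinates $x,y,z$, homogeneous coordinates $J,X,Y,Z$ and plane at infinity $\Sigma_\infty: J=0$, let $\mathcal H$ be the Hermitian surface with affine equation $z^q+z=x^{q+1}+y^{q+1}$ and let $\mathcal Q$ be an irreducible quadric with affine equation $z=ax^2+by^2+cxy+dx+ey+f$, where $a,b,c,d,e,f\in\mathrm{GF}(q^2)$. Let $N=|(\mathcal H\cap\mathcal Q)\setminus\Sigma_\infty|$. Then: \begin{itemize} \item if $\mathcal Q$ is elliptic, $N\in\{q^3-q^2,\ q^3-q^2+q,\ q^3-q,\ q^3,\ q^3+q,\ q^3+q^2-q,\ q^3+q^2\}$; \item if $\mathcal Q$ is a quadratic cone, $N\in\{q^3-q^2+q,\ q^3-q,\ q^3+q,\ q^3+q^2-q\}$; \item if $\mathcal Q$ is hyperbolic, $N\in\{q^2,\ q^3-q^2,\ q^3-q^2+q,\ q^3-q,\ q^3,\ q^3+q,\ q^3+q^2-q,\ q^3+q^2,\ 2q^3-q^2\}$. \end{itemize}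
   Context: Here $P_\infty=(0,0,0,1)$ lies on both $\mathcal H$ and $\mathcal Q$, and $\Sigma_\infty$ is the common tangent plane of $\mathcal H$ and $\mathcal Q$ at $P_\infty$. A quadratic cone is the quadric projecting an irreducible conic in a plane from a vertex not on that plane. *)

theory Defs
  imports Main
begin

text \<open>Points of PG(3,K) are represented by nonzero vectors (J,X,Y,Z) in K^4;
  J = 0 is the plane at infinity.\<close>

type_synonym 'a vec4 = "'a \<times> 'a \<times> 'a \<times> 'a"

fun vadd :: "'a::field vec4 \<Rightarrow> 'a vec4 \<Rightarrow> 'a vec4" where
  "vadd (a1,b1,c1,d1) (a2,b2,c2,d2) = (a1+a2, b1+b2, c1+c2, d1+d2)"

fun smul :: "'a::field \<Rightarrow> 'a vec4 \<Rightarrow> 'a vec4" where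
  "smul k (a1,b1,c1,d1) = (k*a1, k*b1, k*c1, k*d1)"

definition zero4 :: "'a::field vec4" where
  "zero4 = (0,0,0,0)"

fun linform :: "'a::field vec4 \<Rightarrow> 'a vec4 \<Rightarrow> 'a" where
  "linform (l1,l2,l3,l4) (J,X,Y,Z) = l1*J + l2*X + l3*Y + l4*Z"

text \<open>Homogenised equation of the quadric z = ax^2+by^2+cxy+dx+ey+f:
  JZ = aX^2+bY^2+cXY+dXJ+eYJ+fJ^2.\<close>
definition Qform :: "'a::field \<Rightarrow> 'a \<Rightarrow> 'a \<Rightarrow> 'a \<Rightarrow> 'a \<Rightarrow> 'a \<Rightarrow> 'a vec4 \<Rightarrow> 'a" where
  "Qform a b c d e f = (\<lambda>(J,X,Y,Z). a*X^2 + b*Y^2 + c*X*Y + d*X*J + e*Y*J + f*J^2 - J*Z)"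

definition polar :: "('a::field vec4 \<Rightarrow> 'a) \<Rightarrow> 'a vec4 \<Rightarrow> 'a vec4 \<Rightarrow> 'a" where
  "polar F u v = F (vadd u v) - F u - F v"

definition singular_pt :: "('a::field vec4 \<Rightarrow> 'a) \<Rightarrow> 'a vec4 \<Rightarrow> bool" where
  "singular_pt F v \<longleftrightarrow> v \<noteq> zero4 \<and> F v = 0 \<and> (\<forall>w. polar F v w = 0)"

definition nonsingular_quadric :: "('a::field vec4 \<Rightarrow> 'a) \<Rightarrow> bool" where
  "nonsingular_quadric F \<longleftrightarrow> \<not> (\<exists>v. singular_pt F v)"

definition irreducible_quadric :: "('a::field vec4 \<Rightarrow> 'a) \<Rightarrow> bool" where
  "irreducible_quadric F \<longleftrightarrow> \<not> (\<exists>l m. \<forall>v. F v = linform l v * linform m v)"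

definition contains_line :: "('a::field vec4 \<Rightarrow> 'a) \<Rightarrow> bool" where
  "contains_line F \<longleftrightarrow> (\<exists>u w. u \<noteq> zero4 \<and> (\<forall>k. w \<noteq> smul k u) \<and>
      (\<forall>s t. F (vadd (smul s u) (smul t w)) = 0))"

definition elliptic_quadric :: "('a::field vec4 \<Rightarrow> 'a) \<Rightarrow> bool" where
  "elliptic_quadric F \<longleftrightarrow> irreducible_quadric F \<and> nonsingular_quadric F \<and> \<not> contains_line F"

definition hyperbolic_quadric :: "('a::field vec4 \<Rightarrow> 'a) \<Rightarrow> bool" where
  "hyperbolic_quadric F \<longleftrightarrow> irreducible_quadric F \<and> nonsingular_quadric F \<and> contains_line F"

text \<open>Quadratic cone: irreducible quadric whose singular points form exactly one
  projective point (the vertex); such a quadric is the cone projecting an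
  irreducible conic from that vertex.\<close>
definition quadratic_cone :: "('a::field vec4 \<Rightarrow> 'a) \<Rightarrow> bool" where
  "quadratic_cone F \<longleftrightarrow> irreducible_quadric F \<and>
     (\<exists>V. singular_pt F V \<and> (\<forall>W. singular_pt F W \<longrightarrow> (\<exists>k. W = smul k V)))"

end

theory Submission
  imports Defs "HOL-Computational_Algebra.Polynomial" "HOL-Computational_Algebra.Primes"
begin

lemma fiber_card:
  fixes f :: "'a::{ab_group_add,finite} \<Rightarrow> 'b::ab_group_add"
  assumes add: "\<And>x y. f (x+y) = f x + f y" and t: "f z0 = t"
  shows "card {x. f x = t} = card {x. f x = 0}"
proof -
  have f0: "f 0 = 0" using add[of 0 0] by simp
  have fd: "f (x - z0) = f x - f z0" for x
    using add[of "x - z0" z0] by (simp add: algebra_simps)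
  have fa: "f (x + z0) = f x + f z0" for x using add by simp
  have "bij_betw (\<lambda>x. x - z0) {x. f x = t} {x. f x = 0}"
    by (rule bij_betw_byWitness[where f'="\<lambda>x. x + z0"]) (auto simp: fd fa t)
  then show ?thesis by (rule bij_betw_same_card)
qed

lemma card_fibers:
  fixes f :: "'a::{ab_group_add,finite} \<Rightarrow> 'b::ab_group_add"
  assumes add: "\<And>x y. f (x+y) = f x + f y"
  shows "card (UNIV::'a set) = card (range f) * card {x. f x = 0}"
proof -
  have U: "(UNIV::'a set) = \<Union> ((\<lambda>t. {x. f x = t}) ` range f)" by auto
  have "card (\<Union> ((\<lambda>t. {x. f x = t}) ` range f)) = (\<Sum>t\<in>range f. card {x. f x = t})"
    by (rule card_UN_disjoint) auto
  also have "\<dots> = (\<Sum>t\<in>range f. card {x. f x = 0})"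
    proof (rule sum.cong)
    fix t assume "t \<in> range f"
    then obtain z where "f z = t" by auto
    then show "card {x. f x = t} = card {x. f x = 0}" by (rule fiber_card[of f, OF add])
  qed simp
  finally show ?thesis using U by simp
qed

lemma nat2_aux: "(n::nat) dvd 2 \<Longrightarrow> n \<noteq> 1 \<Longrightarrow> n \<noteq> 0 \<Longrightarrow> n \<le> 2 \<Longrightarrow> n = 2" by arith

lemma bridge_val:
  fixes q M Z C :: nat
  assumes q: "q \<ge> 2" and M: "M \<le> q^2" and ZC: "(Z = 1 \<and> C = q+1) \<or> (Z = 2*q-1 \<and> C = q-1)"
  shows "int (M*Z + (q^2-M)*C) = int q^3 + int q^2 - int q * int M \<or>
         int (M*Z + (q^2-M)*C) = int q^3 - int q^2 + int q * int M"
proof -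
  have e: "int (M*Z + (q^2-M)*C) = int M * int Z + (int q^2 - int M) * int C"
    using M by (simp add: of_nat_diff)
  show ?thesis using ZC
  proof
    assume "Z = 1 \<and> C = q+1"
    then show ?thesis unfolding e by (simp add: algebra_simps power2_eq_square power3_eq_cube)
  next
    assume "Z = 2*q-1 \<and> C = q-1"
    moreover have "int (2*q-1) = 2 * int q - 1" "int (q - 1) = int q - 1" using q by auto
    ultimately show ?thesis unfolding e by (simp add: algebra_simps power2_eq_square power3_eq_cube)
  qed
qed

lemma nat_facts: fixes q :: nat assumes "q \<ge> 2"
  shows "int (q^3 - q^2) = int q^3 - int q^2" "int (q^3 - q) = int q^3 - int q"
   "int (q^3 + q^2 - q) = int q^3 + int q^2 - int q" "int (2*q^3 - q^2) = 2*int q^3 - int q^2"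
   "int (q - 1) = int q - 1" "int (2*q - 1) = 2*int q - 1"
   "int (q - Suc 0) = int q - 1" "int (2*q - Suc 0) = 2*int q - 1"
proof -
  have a: "q^2 \<le> q^3" "q \<le> q^3" using assms by (auto simp: power2_eq_square power3_eq_cube)
  show "int (q^3 - q^2) = int q^3 - int q^2" using a by (simp add: of_nat_diff)
  show "int (q^3 - q) = int q^3 - int q" using a by (simp add: of_nat_diff)
  show "int (q^3 + q^2 - q) = int q^3 + int q^2 - int q" using a by (simp add: of_nat_diff)
  show "int (2*q^3 - q^2) = 2*int q^3 - int q^2" using a by (simp add: of_nat_diff)
  show "int (q - 1) = int q - 1" "int (2*q - 1) = 2*int q - 1" using assms by auto
  show "int (q - Suc 0) = int q - 1" "int (2*q - Suc 0) = 2*int q - 1" using assms by auto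
qed

lemma final_cone:
  fixes q M Z C N :: nat
  assumes q: "q \<ge> 2" and M: "M \<le> q^2" and ZC: "(Z = 1 \<and> C = q+1) \<or> (Z = 2*q-1 \<and> C = q-1)"
    and N: "N = M*Z + (q^2-M)*C" and Mset: "M \<in> {1, q-1, q+1, 2*q-1}"
  shows "N \<in> {q^3 - q^2 + q, q^3 - q, q^3 + q, q^3 + q^2 - q}"
proof -
  define Q where "Q = int q"
  have v: "int N = Q^3 + Q^2 - Q * int M \<or> int N = Q^3 - Q^2 + Q * int M"
    using bridge_val[OF q M ZC] N Q_def by simp
  have m: "int M \<in> {1, Q-1, Q+1, 2*Q-1}" using Mset
    by (elim insertE emptyE; simp add: nat_facts[OF q] Q_def)
  have "int N \<in> {Q^3-Q^2+Q, Q^3-Q, Q^3+Q, Q^3+Q^2-Q}"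
    using v m by (elim disjE insertE emptyE; simp add: algebra_simps power2_eq_square power3_eq_cube)
  then have "int N \<in> int ` {q^3 - q^2 + q, q^3 - q, q^3 + q, q^3 + q^2 - q}"
    by (simp add: nat_facts[OF q] Q_def)
  then show ?thesis by (simp only: inj_image_mem_iff[OF inj_of_nat])
qed

lemma final_ell:
  fixes q M Z C N :: nat
  assumes q: "q \<ge> 2" and M: "M \<le> q^2" and ZC: "(Z = 1 \<and> C = q+1) \<or> (Z = 2*q-1 \<and> C = q-1)"
    and N: "N = M*Z + (q^2-M)*C" and Mset: "M \<in> {0, 1, q-1, q, q+1, 2*q-1, 2*q}"
  shows "N \<in> {q^3 - q^2, q^3 - q^2 + q, q^3 - q, q^3, q^3 + q, q^3 + q^2 - q, q^3 + q^2}"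
proof -
  define Q where "Q = int q"
  have v: "int N = Q^3 + Q^2 - Q * int M \<or> int N = Q^3 - Q^2 + Q * int M"
    using bridge_val[OF q M ZC] N Q_def by simp
  have m: "int M \<in> {0, 1, Q-1, Q, Q+1, 2*Q-1, 2*Q}" using Mset
    by (elim insertE emptyE; simp add: nat_facts[OF q] Q_def)
  have "int N \<in> {Q^3-Q^2, Q^3-Q^2+Q, Q^3-Q, Q^3, Q^3+Q, Q^3+Q^2-Q, Q^3+Q^2}"
    using v m by (elim disjE insertE emptyE; simp add: algebra_simps power2_eq_square power3_eq_cube)
  then have "int N \<in> int ` {q^3 - q^2, q^3 - q^2 + q, q^3 - q, q^3, q^3 + q, q^3 + q^2 - q, q^3 + q^2}"
    by (simp add: nat_facts[OF q] Q_def)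
  then show ?thesis by (simp only: inj_image_mem_iff[OF inj_of_nat])
qed

lemma final_hyp:
  fixes q M Z C N :: nat
  assumes q: "q \<ge> 2" and M: "M \<le> q^2" and ZC: "(Z = 1 \<and> C = q+1) \<or> (Z = 2*q-1 \<and> C = q-1)"
    and N: "N = M*Z + (q^2-M)*C" and Mset: "M \<in> {0, 1, q-1, q, q+1, 2*q-1, 2*q, q^2}"
  shows "N \<in> {q^2, q^3 - q^2, q^3 - q^2 + q, q^3 - q, q^3, q^3 + q, q^3 + q^2 - q, q^3 + q^2, 2*q^3 - q^2}"
proof -
  define Q where "Q = int q"
  have v: "int N = Q^3 + Q^2 - Q * int M \<or> int N = Q^3 - Q^2 + Q * int M"
    using bridge_val[OF q M ZC] N Q_def by simp
  have m: "int M \<in> {0, 1, Q-1, Q, Q+1, 2*Q-1, 2*Q, Q^2}" using Mset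
    by (elim insertE emptyE; simp add: nat_facts[OF q] Q_def)
  have "int N \<in> {Q^2, Q^3-Q^2, Q^3-Q^2+Q, Q^3-Q, Q^3, Q^3+Q, Q^3+Q^2-Q, Q^3+Q^2, 2*Q^3-Q^2}"
    using v m by (elim disjE insertE emptyE; simp add: algebra_simps power2_eq_square power3_eq_cube)
  then have "int N \<in> int ` {q^2, q^3 - q^2, q^3 - q^2 + q, q^3 - q, q^3, q^3 + q, q^3 + q^2 - q, q^3 + q^2, 2*q^3 - q^2}"
    by (simp add: nat_facts[OF q] Q_def)
  then show ?thesis by (simp only: inj_image_mem_iff[OF inj_of_nat])
qed

locale gfq =
  fixes q :: nat and ty :: "'a::{field,finite} itself"
  assumes qpow: "\<exists>h. q = 2^h" and cardK: "card (UNIV::'a set) = q^2"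
begin

lemma card_ge2: "card (UNIV::'a set) \<ge> 2"
proof -
  have "{0,1::'a} \<subseteq> UNIV" by simp
  then have "card {0,1::'a} \<le> card (UNIV::'a set)" by (rule card_mono[OF finite_UNIV])
  then show ?thesis by simp
qed

lemma q_ge2: "q \<ge> 2"
proof -
  have "q^2 \<ge> 2" using card_ge2 cardK by simp
  then have "q \<noteq> 0" "q \<noteq> 1" by (auto simp: power2_eq_square) (cases q, auto)
  then show ?thesis by linarith
qed

lemma powcard: "(x::'a) ^ (q^2) = x"
proof (cases "x = 0")
  case True then show ?thesis using q_ge2 by simp
next
  case False
  have c: "card (UNIV::'a set) > 0" by (simp add: finite_UNIV_card_ge_0)
  have "x * (\<Prod>y\<in>UNIV-{0}. x * y) = x * x ^ (card (UNIV::'a set) - 1) * \<Prod>(UNIV-{0::'a})"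
    by (simp add: prod.distrib mult_ac)
  also have "x * x ^ (card (UNIV::'a set) - 1) = x ^ Suc (card (UNIV::'a set) - 1)"
    by (subst power_Suc) auto
  also have "Suc (card (UNIV::'a set) - 1) = card (UNIV::'a set)" using c by simp
  also have "(\<Prod>y\<in>UNIV-{0}. x * y) = (\<Prod>y\<in>UNIV-{0::'a}. y)"
    by (rule prod.reindex_bij_witness[of _ "\<lambda>y. y / x" "\<lambda>y. x * y"]) (use False in auto)
  finally show ?thesis using cardK by simp
qed

lemma q_even: "even q"
proof -
  obtain h where h: "q = 2^h" using qpow by blast
  have "h \<noteq> 0" using q_ge2 h by (cases h) auto
  then show ?thesis using h by simp
qed

lemma two0: "(2::'a) = 0"
proof -
  have "even (q^2)" using q_even by simp
  then have "(-1::'a)^(q^2) = 1" by simp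
  then have "(-1::'a) = 1" using powcard[of "-1"] by simp
  then show ?thesis by (metis one_add_one add.right_inverse)
qed

lemma char2: "CHAR('a) = 2"
proof -
  have "of_nat 2 = (0::'a)" using two0 by simp
  then have "CHAR('a) dvd 2" by (simp only: of_nat_eq_0_iff_char_dvd)
  moreover have "CHAR('a) \<noteq> 1" by simp
  moreover have "CHAR('a) \<noteq> 0" by (simp add: finite_imp_CHAR_pos)
  moreover have "CHAR('a) \<le> 2" using calculation(1) by (rule dvd_imp_le) simp
  ultimately show ?thesis using nat2_aux by blast
qed

lemma neg_self: "- (x::'a) = x"
proof -
  have "x + x = 2 * x" by simp
  then have "x + x = 0" using two0 by simp
  then show ?thesis by (simp add: add_eq_0_iff2 eq_neg_iff_add_eq_0)
qed

lemma add_self[simp]: "(x::'a) + x = 0"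
proof -
  have "x + - x = 0" by (rule right_minus)
  then show ?thesis by (simp add: neg_self)
qed

lemma diff_is_add: "(x::'a) - y = x + y"
  by (metis diff_conv_add_uminus neg_self)

lemma eq_iff_add0: "((x::'a) = y) \<longleftrightarrow> x + y = 0"
  by (metis add_self add.assoc add_0_right add_0_left add.commute)

lemma frob: "((x::'a) + y)^q = x^q + y^q"
proof -
  obtain h where h: "q = 2^h" using qpow by blast
  show ?thesis using freshmans_dream'[where 'a='a and m=q and n=h] char2 h by simp
qed

lemma qq[simp]: "((x::'a)^q)^q = x"
  by (metis powcard power_mult power2_eq_square)

lemma frob_mult: "((x::'a) * y)^q = x^q * y^q" by (simp add: power_mult_distrib)


definition Fq :: "'a set" where "Fq = {z. z^q = z}"
definition tr :: "'a \<Rightarrow> 'a" where "tr z = z^q + z"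
definition nm :: "'a \<Rightarrow> 'a" where "nm z = z^q * z"



lemma q_pos: "q > 0" using q_ge2 by simp

lemma zero_q[simp]: "(0::'a)^q = 0" using q_pos by simp

lemma tr_add: "tr (x+y) = tr x + tr y"
  unfolding tr_def by (simp add: frob add_ac)

lemma tr_F: "(tr z)^q = tr z"
  unfolding tr_def by (simp add: frob add.commute)

lemma tr_pow: "tr (z^q) = tr z"
  unfolding tr_def by (simp add: add.commute)

lemma tr_zero_iff: "tr z = 0 \<longleftrightarrow> z^q = z"
  unfolding tr_def using eq_iff_add0[of "z^q" z] by simp

lemma tr_smul: "s^q = s \<Longrightarrow> tr (s*z) = s * tr z"
  unfolding tr_def by (simp add: frob_mult distrib_left)

lemma tr_of_F: "s^q = s \<Longrightarrow> tr s = 0"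
  unfolding tr_def by simp

lemma nm_F: "(nm z)^q = nm z"
  unfolding nm_def by (simp add: frob_mult mult.commute)

lemma nm_add: "nm (x+y) = nm x + nm y + tr (x * y^q)"
  unfolding nm_def tr_def by (simp add: frob frob_mult) (simp add: algebra_simps)

lemma nm_mult: "nm (x*y) = nm x * nm y"
  unfolding nm_def by (simp add: frob_mult mult_ac)

lemma nm_smul: "s^q = s \<Longrightarrow> nm (s*z) = s^2 * nm z"
  unfolding nm_def by (simp add: frob_mult mult_ac power2_eq_square)

lemma sq_add: "((x::'a)+y)^2 = x^2 + y^2"
proof -
  have "(x+y)^2 = x^2 + y^2 + 2*x*y" by (simp add: power2_eq_square algebra_simps)
  then show ?thesis using two0 by simp
qed

lemma sq_inj: "(x::'a)^2 = y^2 \<Longrightarrow> x = y"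
  by (metis eq_iff_add0 sq_add power_eq_0_iff zero_neq_numeral)

lemma sqrt_ex: "\<exists>r::'a. r^2 = x"
proof -
  have "inj (\<lambda>r::'a. r^2)" by (rule injI) (rule sq_inj)
  then have "surj (\<lambda>r::'a. r^2)" by (rule finite_UNIV_inj_surj[OF finite_UNIV])
  then obtain r where "x = r^2" by (metis UNIV_I imageE)
  then show ?thesis by blast
qed

lemma sqrt_F: "s^q = s \<Longrightarrow> r^2 = s \<Longrightarrow> r^q = (r::'a)"
proof -
  assume a: "s^q = s" "r^2 = s"
  have "(r^q)^2 = (r^2)^q" by (simp add: power_mult[symmetric] mult.commute)
  then have "(r^q)^2 = r^2" using a by simp
  then show ?thesis by (rule sq_inj)
qed

lemma Fq_tr: "Fq = {z. tr z = 0}"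
  unfolding Fq_def using tr_zero_iff by auto

lemma card_Fq_le: "card Fq \<le> q"
proof -
  define p :: "'a poly" where "p = monom 1 q + [:0,1:]"
  have dp: "degree p = q" unfolding p_def using q_ge2
    by (subst degree_add_eq_left) (auto simp: degree_monom_eq)
  then have "p \<noteq> 0" using q_ge2 by auto
  then have "card {x. poly p x = 0} \<le> degree p" by (rule card_poly_roots_bound)
  moreover have "{x. poly p x = 0} = Fq" unfolding p_def Fq_def
    by (auto simp: poly_monom tr_zero_iff[unfolded tr_def])
  ultimately show ?thesis using dp by simp
qed

lemma card_Fq: "card Fq = q" and range_tr: "range tr = Fq"
proof -
  have ad: "\<And>x y. tr (x+y) = tr x + tr y" by (rule tr_add)
  have c: "q^2 = card (range tr) * card Fq" using card_fibers[of tr, OF ad] cardK Fq_tr by simp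
  have sub: "range tr \<subseteq> Fq" unfolding Fq_def using tr_F by auto
  then have "card (range tr) \<le> card Fq" by (intro card_mono) auto
  then have "q^2 \<le> card Fq * card Fq" using c by simp
  then have "q \<le> card Fq"
  proof -
    assume h: "q^2 \<le> card Fq * card Fq"
    show ?thesis
    proof (rule ccontr)
      assume "\<not> q \<le> card Fq"
      then have "card Fq < q" by simp
      then have "(card Fq)^2 < q^2" by (rule power_strict_mono) auto
      then show False using h by (simp add: power2_eq_square)
    qed
  qed
  then show cF: "card Fq = q" using card_Fq_le by simp
  then have "card (range tr) = q" using c q_pos by (simp add: power2_eq_square)
  then show "range tr = Fq" using card_subset_eq[of Fq "range tr"] sub cF by simp
qed


lemma Fq_iff: "x \<in> Fq \<longleftrightarrow> x^q = x" unfolding Fq_def by simp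

lemma one_q[simp]: "(1::'a)^q = 1" by simp

lemma inv_q: "x^q = x \<Longrightarrow> (inverse x)^q = inverse (x::'a)"
  by (simp add: power_inverse)

lemma tr_swap: "tr (x * y^q) = tr (y * x^q)"
  unfolding tr_def by (simp add: frob_mult mult_ac add.commute)

lemma nm_zero[simp]: "nm 0 = 0" unfolding nm_def by simp
lemma tr_zero[simp]: "tr 0 = 0" unfolding tr_def by simp

definition QQ :: "'a \<Rightarrow> 'a \<Rightarrow> 'a \<Rightarrow> 'a" where
  "QQ k l y = k * nm y + tr (l * y^2)"

lemma QQ_F: "k^q = k \<Longrightarrow> (QQ k l y)^q = QQ k l y"
  unfolding QQ_def by (simp add: frob frob_mult nm_F tr_F)

lemma QQ_zero[simp]: "QQ k l 0 = 0" unfolding QQ_def by simp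

lemma QQ_smul: "k^q = k \<Longrightarrow> s^q = s \<Longrightarrow> QQ k l (s*y) = s^2 * QQ k l y"
proof -
  assume k: "k^q = k" and s: "s^q = s"
  have s2: "(s^2)^q = s^2" using s by (simp add: power_mult[symmetric] mult.commute power_mult)
  have "tr (l * (s*y)^2) = tr (s^2 * (l * y^2))" by (simp add: power_mult_distrib mult_ac)
  also have "\<dots> = s^2 * tr (l * y^2)" using s2 by (rule tr_smul)
  moreover have "nm (s*y) = s^2 * nm y" by (rule nm_smul[OF s])
  ultimately show ?thesis unfolding QQ_def by (simp add: algebra_simps)
qed

lemma QQ_add: "QQ k l (x+y) = QQ k l x + QQ k l y + k * tr (x * y^q)"
  unfolding QQ_def by (simp add: nm_add sq_add tr_add algebra_simps)

lemma QQ_cnt_nonzero: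
  assumes k: "k^q = k" and t: "t^q = t" "t \<noteq> 0"
  shows "card {y. QQ k l y = t} = card {y. QQ k l y = 1}"
proof -
  obtain s where s2: "s^2 = t" using sqrt_ex by blast
  have sq: "s^q = s" using sqrt_F[OF t(1) s2] .
  have s0: "s \<noteq> 0" using s2 t(2) by auto
  have "bij_betw (\<lambda>y. s * y) {y. QQ k l y = 1} {y. QQ k l y = t}"
  proof (rule bij_betw_byWitness[where f'="\<lambda>y. y / s"])
    show "\<forall>a\<in>{y. QQ k l y = 1}. s * a / s = a" using s0 by simp
    show "\<forall>a\<in>{y. QQ k l y = t}. s * (a / s) = a" using s0 by simp
    show "(*) s ` {y. QQ k l y = 1} \<subseteq> {y. QQ k l y = t}"
      using QQ_smul[OF k sq] s2 by auto
    show "(\<lambda>y. y / s) ` {y. QQ k l y = t} \<subseteq> {y. QQ k l y = 1}"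
    proof
      fix z assume "z \<in> (\<lambda>y. y / s) ` {y. QQ k l y = t}"
      then obtain y where y: "QQ k l y = t" "z = y / s" by auto
      have "y = s * z" using y s0 by simp
      then have "QQ k l y = s^2 * QQ k l z" using QQ_smul[OF k sq] by metis
      then have "t = s^2 * QQ k l z" using y by simp
      then show "z \<in> {y. QQ k l y = 1}" using s2 t(2) by simp
    qed
  qed
  then show ?thesis by (simp add: bij_betw_same_card)
qed

lemma sum_over_Fq:
  assumes k: "k^q = k"
  shows "(\<Sum>t\<in>Fq. card {y. QQ k l y = t}) = q^2"
proof -
  have U: "(UNIV::'a set) = \<Union> ((\<lambda>t. {y. QQ k l y = t}) ` Fq)"
    using QQ_F[OF k] unfolding Fq_def by auto
  have "card (\<Union> ((\<lambda>t. {y. QQ k l y = t}) ` Fq)) = (\<Sum>t\<in>Fq. card {y. QQ k l y = t})"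
    by (rule card_UN_disjoint) auto
  then show ?thesis using U cardK by simp
qed

lemma zero_in_Fq: "0 \<in> Fq" unfolding Fq_def by simp

lemma cnt_relation:
  assumes k: "k^q = k"
  shows "card {y. QQ k l y = 0} + (q - 1) * card {y. QQ k l y = 1} = q^2"
proof -
  have "(\<Sum>t\<in>Fq. card {y. QQ k l y = t}) =
        card {y. QQ k l y = 0} + (\<Sum>t\<in>Fq - {0}. card {y. QQ k l y = t})"
    using zero_in_Fq by (simp add: sum.remove)
  also have "(\<Sum>t\<in>Fq - {0}. card {y. QQ k l y = t}) = (\<Sum>t\<in>Fq - {0}. card {y. QQ k l y = 1})"
    by (rule sum.cong) (auto simp: Fq_iff intro: QQ_cnt_nonzero[OF k])
  also have "\<dots> = (q - 1) * card {y. QQ k l y = 1}"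
    using card_Fq zero_in_Fq by simp
  finally show ?thesis using sum_over_Fq[OF k] by simp
qed


lemma Fq_mult: "x^q = x \<Longrightarrow> y^q = y \<Longrightarrow> (x*y)^q = (x*(y::'a))"
  by (simp add: frob_mult)

lemma cnt_zero:
  assumes k: "k^q = k" "k \<noteq> 0"
  shows "card {y. QQ k l y = 0} = 1 \<or> card {y. QQ k l y = 0} = 2*q - 1"
proof (cases "\<forall>y. y \<noteq> 0 \<longrightarrow> QQ k l y \<noteq> 0")
  case True
  have "{y. QQ k l y = 0} = {0}"
  proof (rule Set.set_eqI)
    fix y
    show "y \<in> {y. QQ k l y = 0} \<longleftrightarrow> y \<in> {0}"
    proof (cases "y = 0")
      case True then show ?thesis by simp
    next
      case False then show ?thesis using \<open>\<forall>y. y \<noteq> 0 \<longrightarrow> QQ k l y \<noteq> 0\<close> by blast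
    qed
  qed
  then show ?thesis by simp
next
  case False
  then obtain x0 where x0: "x0 \<noteq> 0" "QQ k l x0 = 0" by auto
  have "inverse k \<in> Fq" using inv_q[OF k(1)] by (simp add: Fq_iff)
  then have "inverse k \<in> range tr" using range_tr by simp
  then obtain z where z: "tr z = inverse k" by (auto simp: image_iff)
  define w where "w = (z / x0)^q"
  have wq: "w^q = z / x0" unfolding w_def by simp
  have B1: "k * tr (x0 * w^q) = 1" using wq x0(1) z k(2) by simp
  have bil: "k * tr (x0 * (g * x0)^q) = 0" if g: "g^q = g" for g
  proof -
    have e: "x0 * (g * x0)^q = g * nm x0" using g by (simp add: frob_mult nm_def mult_ac)
    have "tr (x0 * (g * x0)^q) = g * tr (nm x0)" unfolding e by (rule tr_smul[OF g])
    then show ?thesis using tr_of_F[OF nm_F] by simp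
  qed
  have bil2: "k * tr (x0 * (g * w)^q) = g" if g: "g^q = g" for g
  proof -
    have e: "x0 * (g * w)^q = g * (x0 * w^q)" using g by (simp add: frob_mult mult_ac)
    have "tr (x0 * (g * w)^q) = g * tr (x0 * w^q)" unfolding e by (rule tr_smul[OF g])
    then show ?thesis using B1 by (metis mult.left_commute mult.right_neutral)
  qed
  define Qw where "Qw = QQ k l w"
  have QwF: "Qw^q = Qw" unfolding Qw_def by (rule QQ_F[OF k(1)])
  have key: "QQ k l (a*x0 + b*w) = b^2 * Qw + a*b" if a: "a^q = a" and b: "b^q = b" for a b
  proof -
    have "QQ k l (a*x0 + b*w) = QQ k l (a*x0) + QQ k l (b*w) + k * tr (a*x0 * (b*w)^q)"
      by (rule QQ_add)
    also have "QQ k l (a*x0) = 0" using QQ_smul[OF k(1) a] x0(2) by simp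
    also have "QQ k l (b*w) = b^2 * Qw" using QQ_smul[OF k(1) b] Qw_def by simp
    also have "a*x0 * (b*w)^q = a * (x0 * (b*w)^q)" by (simp add: mult_ac)
    also have "k * tr (a * (x0 * (b*w)^q)) = a * (k * tr (x0 * (b*w)^q))"
    proof -
      have "tr (a * (x0 * (b*w)^q)) = a * tr (x0 * (b*w)^q)" by (rule tr_smul[OF a])
      then show ?thesis by (simp add: mult.left_commute)
    qed
    also have "k * tr (x0 * (b*w)^q) = b" by (rule bil2[OF b])
    finally show ?thesis by simp
  qed
  define phi where "phi = (\<lambda>(a::'a,b::'a). a*x0 + b*w)"
  have inj: "inj_on phi (Fq \<times> Fq)"
  proof (rule inj_onI)
    fix p p' assume p: "p \<in> Fq \<times> Fq" "p' \<in> Fq \<times> Fq" and e: "phi p = phi p'"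
    obtain a b where ab: "p = (a,b)" by (cases p)
    obtain a' b' where ab': "p' = (a',b')" by (cases p')
    have F: "a^q = a" "b^q = b" "a'^q = a'" "b'^q = b'" using p ab ab' by (auto simp: Fq_iff)
    have e1: "a*x0 + b*w = a'*x0 + b'*w" using e ab ab' phi_def by simp
    have e2: "(b + b') * w = (a + a') * x0"
    proof -
      have "(b + b') * w + (a + a') * x0 = (a*x0 + b*w) + (a'*x0 + b'*w)" by (simp add: algebra_simps)
      also have "\<dots> = 0" using e1 by simp
      finally show ?thesis using eq_iff_add0[of "(b + b') * w" "(a + a') * x0"] by simp
    qed
    have gF: "(b + b')^q = b + b'" "(a + a')^q = a + a'" using F by (simp_all add: frob)
    have "b + b' = k * tr (x0 * ((b + b') * w)^q)" using bil2[OF gF(1)] by simp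
    also have "\<dots> = k * tr (x0 * ((a + a') * x0)^q)" using e2 by simp
    also have "\<dots> = 0" by (rule bil[OF gF(2)])
    finally have bb: "b = b'" using eq_iff_add0[of b b'] by simp
    then have "a * x0 = a' * x0" using e1 by simp
    then have "a = a'" using x0(1) by simp
    then show "p = p'" using ab ab' bb by simp
  qed
  have cardFF: "card (Fq \<times> Fq) = q^2" using card_Fq by (simp add: card_cartesian_product power2_eq_square)
  have surj: "phi ` (Fq \<times> Fq) = UNIV"
  proof -
    have "card (phi ` (Fq \<times> Fq)) = card (UNIV::'a set)" using card_image[OF inj] cardFF cardK by simp
    then show ?thesis using card_subset_eq[of UNIV "phi ` (Fq \<times> Fq)"] by simp
  qed
  define S where "S = {p \<in> Fq \<times> Fq. QQ k l (phi p) = 0}"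
  have Z: "{y. QQ k l y = 0} = phi ` S" unfolding S_def using surj by auto
  have cZ: "card {y. QQ k l y = 0} = card S"
    unfolding Z by (rule card_image) (rule inj_on_subset[OF inj], auto simp: S_def)
  have S2: "S = (\<lambda>a. (a, 0)) ` Fq \<union> (\<lambda>b. (b * Qw, b)) ` (Fq - {0})"
  proof (intro set_eqI)
    fix p :: "'a \<times> 'a"
    obtain a b where ab: "p = (a,b)" by (cases p)
    show "p \<in> S \<longleftrightarrow> p \<in> (\<lambda>a. (a, 0)) ` Fq \<union> (\<lambda>b. (b * Qw, b)) ` (Fq - {0})"
    proof
      assume "p \<in> S"
      then have F: "a^q = a" "b^q = b" and e: "QQ k l (a*x0 + b*w) = 0"
        using ab by (auto simp: S_def Fq_iff phi_def)
      have e': "b * (b * Qw + a) = 0" using e key[OF F] by (simp add: power2_eq_square algebra_simps)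
      show "p \<in> (\<lambda>a. (a, 0)) ` Fq \<union> (\<lambda>b. (b * Qw, b)) ` (Fq - {0})"
      proof (cases "b = 0")
        case True then show ?thesis using ab F by (auto simp: Fq_iff)
      next
        case False
        then have "b * Qw + a = 0" using e' by simp
        then have "a = b * Qw" using eq_iff_add0[of a "b * Qw"] by (simp add: add.commute)
        then show ?thesis using ab F False by (auto simp: Fq_iff)
      qed
    next
      assume "p \<in> (\<lambda>a. (a, 0)) ` Fq \<union> (\<lambda>b. (b * Qw, b)) ` (Fq - {0})"
      then show "p \<in> S"
      proof
        assume "p \<in> (\<lambda>a. (a, 0)) ` Fq"
        then obtain a' where "p = (a', 0)" "a'^q = a'" by (auto simp: Fq_iff)
        then show ?thesis using key[of a' 0] by (simp add: S_def Fq_iff phi_def)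
      next
        assume "p \<in> (\<lambda>b. (b * Qw, b)) ` (Fq - {0})"
        then obtain b' where p': "p = (b' * Qw, b')" "b'^q = b'" by (auto simp: Fq_iff)
        have F1: "(b' * Qw)^q = b' * Qw" using p'(2) QwF by (simp add: frob_mult)
        have "QQ k l (b' * Qw * x0 + b' * w) = b'^2 * Qw + b' * Qw * b'" by (rule key[OF F1 p'(2)])
        also have "\<dots> = 0" by (simp add: power2_eq_square mult_ac)
        finally show ?thesis using p' F1 by (simp add: S_def Fq_iff phi_def)
      qed
    qed
  qed
  have c1: "card ((\<lambda>a. (a, 0::'a)) ` Fq) = q" using card_Fq by (simp add: card_image inj_on_def)
  have c2: "card ((\<lambda>b. (b * Qw, b)) ` (Fq - {0})) = q - 1"
    using card_Fq zero_in_Fq by (simp add: card_image inj_on_def)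
  have dj: "(\<lambda>a. (a, 0::'a)) ` Fq \<inter> (\<lambda>b. (b * Qw, b)) ` (Fq - {0}) = {}" by auto
  have "card S = q + (q - 1)" unfolding S2 using c1 c2 dj by (simp add: card_Un_disjoint)
  then show ?thesis using cZ q_ge2 by (simp add: mult_2)
qed


lemma QQ_counts:
  assumes k: "k^q = k" "k \<noteq> 0"
  shows "\<exists>Z C. ((Z = 1 \<and> C = q+1) \<or> (Z = 2*q-1 \<and> C = q-1)) \<and>
           (\<forall>t. t^q = t \<longrightarrow> card {y. QQ k l y = t} = (if t = 0 then Z else C))"
proof -
  define Z where "Z = card {y. QQ k l y = 0}"
  define C where "C = card {y. QQ k l y = 1}"
  have rel: "Z + (q - 1) * C = q^2" unfolding Z_def C_def by (rule cnt_relation[OF k(1)])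
  define r where "r = q - 2"
  have r: "q = Suc (Suc r)" using q_ge2 unfolding r_def by simp
  have ZC: "(Z = 1 \<and> C = q+1) \<or> (Z = 2*q-1 \<and> C = q-1)"
  proof (cases "Z = 1")
    case True
    then have h: "(r+1) * C = (r+1) * (r + 3)" using rel r by (simp add: power2_eq_square algebra_simps)
    have nz: "(r+1::nat) \<noteq> 0" by simp
    have "C = r + 3" using h mult_left_cancel[OF nz, of C "r+3"] by blast
    then show ?thesis using True r by simp
  next
    case False
    then have "Z = 2*q-1" using cnt_zero[OF k, of l] Z_def by simp
    then have h: "(r+1) * C = (r+1) * (r+1)" using rel r by (simp add: power2_eq_square algebra_simps)
    have nz: "(r+1::nat) \<noteq> 0" by simp
    have "C = r + 1" using h mult_left_cancel[OF nz, of C "r+1"] by blast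
    then show ?thesis using \<open>Z = 2*q-1\<close> r by simp
  qed
  have "\<forall>t. t^q = t \<longrightarrow> card {y. QQ k l y = t} = (if t = 0 then Z else C)"
  proof (intro allI impI)
    fix t :: 'a assume t: "t^q = t"
    show "card {y. QQ k l y = t} = (if t = 0 then Z else C)"
    proof (cases "t = 0")
      case True then show ?thesis unfolding Z_def by simp
    next
      case False then show ?thesis unfolding C_def using QQ_cnt_nonzero[OF k(1) t False] by simp
    qed
  qed
  then show ?thesis using ZC by blast
qed

lemma shift_count:
  assumes k: "k^q = k" "k \<noteq> 0"
  shows "card {y. QQ k l y + tr (m*y) + nu = 0} =
         card {y. QQ k l y = QQ k l ((m/k)^q) + tr (m*(m/k)^q) + nu}"
proof -
  define w where "w = (m/k)^q"
  define c where "c = QQ k l w + tr (m*w) + nu"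
  have wq: "w^q = m/k" unfolding w_def by simp
  have P: "QQ k l (y + w) + tr (m*(y + w)) + nu = QQ k l y + c" for y
  proof -
    have e1: "k * (y * (m/k)) = m * y" using k(2) by simp
    have "tr (k * (y * (m/k))) = k * tr (y * (m/k))" by (rule tr_smul[OF k(1)])
    then have "k * tr (y * (m/k)) = tr (m * y)" unfolding e1 by simp
    then have e: "k * tr (y * w^q) = tr (m * y)" unfolding wq .
    have "QQ k l (y + w) + tr (m*(y + w)) + nu
          = QQ k l y + c + (k * tr (y * w^q) + tr (m*y))"
      unfolding c_def QQ_add by (simp add: distrib_left tr_add algebra_simps)
    also have "k * tr (y * w^q) + tr (m*y) = 0" using e by simp
    finally show ?thesis by simp
  qed
  have "bij_betw (\<lambda>y. y + w) {y. QQ k l y = c} {y. QQ k l y + tr (m*y) + nu = 0}"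
  proof (rule bij_betw_byWitness[where f'="\<lambda>y. y + w"])
    show "\<forall>a\<in>{y. QQ k l y = c}. a + w + w = a" by (simp add: add.assoc)
    show "\<forall>a\<in>{y. QQ k l y + tr (m*y) + nu = 0}. a + w + w = a" by (simp add: add.assoc)
    show "(\<lambda>y. y + w) ` {y. QQ k l y = c} \<subseteq> {y. QQ k l y + tr (m*y) + nu = 0}"
      using P by auto
    show "(\<lambda>y. y + w) ` {y. QQ k l y + tr (m*y) + nu = 0} \<subseteq> {y. QQ k l y = c}"
    proof
      fix z assume "z \<in> (\<lambda>y. y + w) ` {y. QQ k l y + tr (m*y) + nu = 0}"
      then obtain y where y: "QQ k l y + tr (m*y) + nu = 0" "z = y + w" by auto
      have "y = z + w" using y(2) by (simp add: add.assoc)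
      then have "QQ k l z + c = 0" using y(1) P[of z] by simp
      then show "z \<in> {y. QQ k l y = c}" using eq_iff_add0[of "QQ k l z" c] by simp
    qed
  qed
  then show ?thesis unfolding c_def w_def by (simp add: bij_betw_same_card)
qed

lemma nondeg_count:
  assumes k: "k^q = k" "k \<noteq> 0" and nu: "nu^q = nu"
  shows "card {y. QQ k l y + tr (m*y) + nu = 0} \<in> {1, q-1, q+1, 2*q-1}"
proof -
  define c where "c = QQ k l ((m/k)^q) + tr (m*(m/k)^q) + nu"
  have cF: "c^q = c" unfolding c_def using QQ_F[OF k(1)] tr_F nu by (simp add: frob)
  obtain Z C where ZC: "(Z = 1 \<and> C = q+1) \<or> (Z = 2*q-1 \<and> C = q-1)"
    and cnt: "\<forall>t. t^q = t \<longrightarrow> card {y. QQ k l y = t} = (if t = 0 then Z else C)"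
    using QQ_counts[OF k, of l] by blast
  have "card {y. QQ k l y + tr (m*y) + nu = 0} = card {y. QQ k l y = c}"
    unfolding c_def by (rule shift_count[OF k])
  also have "\<dots> = (if c = 0 then Z else C)" using cnt cF by simp
  finally show ?thesis using ZC by auto
qed


lemma tr_sq: "tr (z^2) = (tr z)^2"
proof -
  have "(z^2)^q = (z^q)^2" by (simp add: power_mult[symmetric] mult.commute)
  then show ?thesis unfolding tr_def by (simp add: sq_add)
qed

lemma tr_lin_fiber:
  assumes r: "r \<noteq> 0" and t: "t^q = t"
  shows "card {y. tr (r*y) = t} = q"
proof -
  have "t \<in> range tr" using range_tr t by (simp add: Fq_iff)
  then obtain z where z: "tr z = t" by (auto simp: image_iff)
  have ad: "\<And>x y. tr (r*(x+y)) = tr (r*x) + tr (r*y)" by (simp add: distrib_left tr_add)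
  have "tr (r * (z/r)) = t" using r z by simp
  then have "card {y. tr (r*y) = t} = card {y. tr (r*y) = 0}"
    by (rule fiber_card[of "\<lambda>y. tr (r*y)", OF ad])
  also have "{y. tr (r*y) = 0} = (\<lambda>s. s / r) ` Fq"
  proof (rule Set.set_eqI)
    fix y
    show "y \<in> {y. tr (r*y) = 0} \<longleftrightarrow> y \<in> (\<lambda>s. s / r) ` Fq"
    proof
      assume "y \<in> {y. tr (r*y) = 0}"
      then have "r*y \<in> Fq" by (simp add: Fq_tr)
      moreover have "y = (r*y) / r" using r by simp
      ultimately show "y \<in> (\<lambda>s. s / r) ` Fq" by blast
    next
      assume "y \<in> (\<lambda>s. s / r) ` Fq"
      then obtain s where "s \<in> Fq" "y = s / r" by blast
      then show "y \<in> {y. tr (r*y) = 0}" using r by (simp add: Fq_tr)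
    qed
  qed
  also have "card ((\<lambda>s. s / r) ` Fq) = card Fq" using r by (intro card_image inj_onI) simp
  finally show ?thesis using card_Fq by simp
qed

lemma roots_le2: "card {u::'a. u^2 + b*u + c = 0} \<le> 2"
proof -
  define p where "p = [:c, b, 1:]"
  have "p \<noteq> 0" unfolding p_def by simp
  then have "card {x. poly p x = 0} \<le> degree p" by (rule card_poly_roots_bound)
  moreover have "degree p = 2" unfolding p_def by simp
  moreover have "{x. poly p x = 0} = {u::'a. u^2 + b*u + c = 0}"
    unfolding p_def by (simp add: power2_eq_square algebra_simps)
  ultimately show ?thesis by simp
qed

lemma degen_count:
  assumes nu: "nu^q = nu"
  shows "card {y. tr (l*y^2) + tr (m*y) + nu = 0} \<in> {0, q, 2*q} \<or>
         (l = 0 \<and> card {y. tr (l*y^2) + tr (m*y) + nu = 0} = q^2)"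
proof -
  obtain r where r2: "r^2 = l" using sqrt_ex by blast
  have T: "tr (l*y^2) = (tr (r*y))^2" for y
  proof -
    have "l*y^2 = (r*y)^2" using r2 by (simp add: power_mult_distrib)
    then show ?thesis using tr_sq by simp
  qed
  show ?thesis
  proof (cases "r = 0")
    case True
    then have l0: "l = 0" using r2 by simp
    show ?thesis
    proof (cases "m = 0")
      case True
      show ?thesis
      proof (cases "nu = 0")
        case True
        then have "{y. tr (l*y^2) + tr (m*y) + nu = 0} = UNIV" using l0 \<open>m = 0\<close> by simp
        then show ?thesis using cardK l0 by simp
      next
        case False
        then have "{y. tr (l*y^2) + tr (m*y) + nu = 0} = {}" using l0 \<open>m = 0\<close> by simp
        then show ?thesis by simp
      qed
    next
      case False
      have "{y. tr (l*y^2) + tr (m*y) + nu = 0} = {y. tr (m*y) = nu}"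
        using l0 eq_iff_add0 by auto
      then show ?thesis using tr_lin_fiber[OF False nu] by simp
    qed
  next
    case False
    define mu where "mu = m / r"
    define P where "P = {z. (tr z)^2 + tr (mu*z) + nu = 0}"
    have eqP: "{y. tr (l*y^2) + tr (m*y) + nu = 0} = (\<lambda>z. z / r) ` P"
    proof (rule Set.set_eqI)
      fix y
      have my: "m*y = mu*(r*y)" unfolding mu_def using False by simp
      show "y \<in> {y. tr (l*y^2) + tr (m*y) + nu = 0} \<longleftrightarrow> y \<in> (\<lambda>z. z / r) ` P"
      proof
        assume "y \<in> {y. tr (l*y^2) + tr (m*y) + nu = 0}"
        then have "r*y \<in> P" unfolding P_def using T[of y] my by simp
        moreover have "y = (r*y)/r" using False by simp
        ultimately show "y \<in> (\<lambda>z. z / r) ` P" by blast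
      next
        assume "y \<in> (\<lambda>z. z / r) ` P"
        then obtain z where z: "z \<in> P" "y = z / r" by blast
        then have "r*y = z" using False by simp
        then show "y \<in> {y. tr (l*y^2) + tr (m*y) + nu = 0}" using z(1) T[of y] my
          unfolding P_def by simp
      qed
    qed
    have cP: "card {y. tr (l*y^2) + tr (m*y) + nu = 0} = card P"
      unfolding eqP using False by (intro card_image inj_onI) simp
    show ?thesis
    proof (cases "mu^q = mu")
      case True
      define R where "R = {u. u^q = u \<and> u^2 + mu*u + nu = 0}"
      have PU: "P = (\<Union>u\<in>R. {z. tr (1*z) = u})"
        unfolding P_def R_def using tr_smul[OF True] tr_F by auto
      have "card (\<Union>u\<in>R. {z. tr (1*z) = u}) = (\<Sum>u\<in>R. card {z. tr (1*z) = u})"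
        by (rule card_UN_disjoint) auto
      also have "\<dots> = (\<Sum>u\<in>R. q)"
      proof (rule sum.cong)
        fix u assume "u \<in> R"
        then have "u^q = u" by (simp add: R_def)
        then show "card {z. tr (1*z) = u} = q" by (rule tr_lin_fiber[OF one_neq_zero])
      qed simp
      finally have cP2: "card P = card R * q" using PU by simp
      have "R \<subseteq> {u. u^2 + mu*u + nu = 0}" unfolding R_def by auto
      then have "card R \<le> card {u. u^2 + mu*u + nu = 0}" by (intro card_mono) auto
      then have "card R \<le> 2" using roots_le2[of mu nu] by simp
      then have "card R = 0 \<or> card R = 1 \<or> card R = 2" by linarith
      then show ?thesis using cP cP2 by auto
    next
      case False
      have trmu: "tr mu \<noteq> 0" using False tr_zero_iff by simp
      define g where "g = (\<lambda>z. (tr z, tr (mu*z)))"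
      have inj: "inj g"
      proof (rule injI)
        fix z z' assume "g z = g z'"
        then have e: "tr z = tr z'" "tr (mu*z) = tr (mu*z')" unfolding g_def by auto
        have d1: "tr (z + z') = 0" using e(1) by (simp add: tr_add)
        then have dq: "(z+z')^q = z + z'" using tr_zero_iff by simp
        have "tr (mu*(z+z')) = 0" using e(2) by (simp add: tr_add distrib_left)
        then have "tr ((z+z')*mu) = 0" by (simp add: mult.commute)
        then have "(z+z') * tr mu = 0" using tr_smul[OF dq] by simp
        then have "z + z' = 0" using trmu by simp
        then show "z = z'" using eq_iff_add0 by simp
      qed
      have rg: "range g = Fq \<times> Fq"
      proof -
        have sub: "range g \<subseteq> Fq \<times> Fq" unfolding g_def using tr_F by (auto simp: Fq_iff)
        have "card (range g) = q^2" using card_image[of g UNIV] inj cardK by simp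
        moreover have "card (Fq \<times> Fq) = q^2" using card_Fq
          by (simp add: card_cartesian_product power2_eq_square)
        ultimately show ?thesis using sub card_subset_eq[of "Fq \<times> Fq" "range g"] by simp
      qed
      define Tset where "Tset = {(u,v). u \<in> Fq \<and> v \<in> Fq \<and> u^2 + v + nu = 0}"
      have gP: "g ` P = Tset"
      proof (rule Set.set_eqI)
        fix p :: "'a \<times> 'a"
        obtain u v where p: "p = (u,v)" by (cases p)
        show "p \<in> g ` P \<longleftrightarrow> p \<in> Tset"
        proof
          assume "p \<in> g ` P"
          then obtain z where "z \<in> P" "p = g z" by blast
          then show "p \<in> Tset" unfolding P_def Tset_def g_def using tr_F by (auto simp: Fq_iff)
        next
          assume pt: "p \<in> Tset"
          then have "p \<in> range g" using rg p unfolding Tset_def by auto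
          then obtain z where z: "p = g z" by blast
          then have "z \<in> P" using pt p unfolding P_def Tset_def g_def by auto
          then show "p \<in> g ` P" using z by blast
        qed
      qed
      have "Tset = (\<lambda>u. (u, u^2 + nu)) ` Fq"
      proof (rule Set.set_eqI)
        fix p :: "'a \<times> 'a"
        obtain u v where p: "p = (u,v)" by (cases p)
        show "p \<in> Tset \<longleftrightarrow> p \<in> (\<lambda>u. (u, u^2 + nu)) ` Fq"
        proof
          assume "p \<in> Tset"
          then have u: "u \<in> Fq" and e: "u^2 + v + nu = 0" using p unfolding Tset_def by auto
          have "v = u^2 + nu" using e eq_iff_add0[of v "u^2 + nu"] by (simp add: add_ac)
          then show "p \<in> (\<lambda>u. (u, u^2 + nu)) ` Fq" using u p by blast
        next
          assume "p \<in> (\<lambda>u. (u, u^2 + nu)) ` Fq"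
          then obtain u' where u': "u' \<in> Fq" "p = (u', u'^2 + nu)" by blast
          have "(u'^2 + nu)^q = u'^2 + nu" using u' nu
            by (simp add: frob Fq_iff power_mult[symmetric] mult.commute power_mult)
          then show "p \<in> Tset" using u' unfolding Tset_def by (simp add: Fq_iff add.assoc[symmetric])
        qed
      qed
      then have "card Tset = q" using card_Fq by (simp add: card_image inj_on_def)
      moreover have "card (g ` P) = card P" using inj by (simp add: card_image inj_on_subset)
      ultimately show ?thesis using cP gP by simp
    qed
  qed
qed


lemma nm_pow: "nm (z^q) = nm z"
  unfolding nm_def by (simp add: mult.commute)

lemma tr_nm: "tr (z * z^q) = 0"
proof -
  have "z * z^q = nm z" unfolding nm_def by (simp add: mult.commute)
  then show ?thesis using tr_of_F[OF nm_F] by simp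
qed

lemma s_formula:
  "QQ 1 a ((c*y+d)^q) + tr ((c*y+d) * (c*y+d)^q) + (nm y + tr (b*y^2) + tr (e*y) + tr f)
   = QQ (nm c + 1) (a^q*c^2 + b) y + tr ((c*d^q + e)*y) + (nm d + tr (a*(d^q)^2) + tr f)"
proof -
  define be where "be = c*y + d"
  have h1: "nm be = nm c * nm y + nm d + tr ((c*d^q)*y)"
    unfolding be_def nm_add nm_mult by (simp add: mult_ac)
  have bq: "be^q = c^q*y^q + d^q" unfolding be_def by (simp add: frob frob_mult)
  have h3: "(a^q*c^2*y^2)^q = a*(c^q*y^q)^2"
    by (simp add: frob_mult power_mult_distrib power_mult[symmetric] mult.commute)
      (simp add: power_mult)
  have h2: "tr (a*(be^q)^2) = tr ((a^q*c^2)*y^2) + tr (a*(d^q)^2)"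
  proof -
    have "tr (a*(be^q)^2) = tr (a*(c^q*y^q)^2) + tr (a*(d^q)^2)"
      unfolding bq sq_add by (simp add: distrib_left tr_add)
    also have "tr (a*(c^q*y^q)^2) = tr ((a^q*c^2*y^2)^q)" using h3 by simp
    also have "\<dots> = tr ((a^q*c^2)*y^2)" by (simp add: tr_pow mult.assoc)
    finally show ?thesis .
  qed
  have "QQ 1 a (be^q) = nm be + tr (a*(be^q)^2)" unfolding QQ_def nm_pow by simp
  moreover have "tr (be * be^q) = 0" by (rule tr_nm)
  ultimately have "QQ 1 a (be^q) + tr (be * be^q) + (nm y + tr (b*y^2) + tr (e*y) + tr f)
     = nm c * nm y + nm d + tr ((c*d^q)*y) + tr ((a^q*c^2)*y^2) + tr (a*(d^q)^2)
       + (nm y + tr (b*y^2) + tr (e*y) + tr f)" using h1 h2 by simp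
  also have "\<dots> = QQ (nm c + 1) (a^q*c^2 + b) y + tr ((c*d^q + e)*y) + (nm d + tr (a*(d^q)^2) + tr f)"
    unfolding QQ_def by (simp add: distrib_right tr_add algebra_simps)
  finally show ?thesis unfolding be_def .
qed

lemma eq_rewrite:
  "(tr (a*x^2 + b*y^2 + c*x*y + d*x + e*y + f) = nm x + nm y) \<longleftrightarrow>
   QQ 1 a x + tr ((c*y+d)*x) + (nm y + tr (b*y^2) + tr (e*y) + tr f) = 0"
proof -
  have "tr (a*x^2 + b*y^2 + c*x*y + d*x + e*y + f) + (nm x + nm y) =
        QQ 1 a x + tr ((c*y+d)*x) + (nm y + tr (b*y^2) + tr (e*y) + tr f)"
    unfolding QQ_def by (simp add: tr_add distrib_right algebra_simps)
  note E = this
  show ?thesis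
    apply (subst eq_iff_add0[of "tr (a*x^2 + b*y^2 + c*x*y + d*x + e*y + f)" "nm x + nm y"])
    apply (subst E)
    apply (rule refl)
    done
qed


lemma card_pairs_sum:
  "card {(x::'a, y::'a). P x y} = (\<Sum>y\<in>UNIV. card {x. P x y})"
proof -
  have "{(x, y). P x y} = (\<lambda>(y,x). (x,y)) ` (SIGMA y:UNIV. {x. P x y})" by auto
  moreover have "inj_on (\<lambda>(y::'a,x::'a). (x,y)) (SIGMA y:UNIV. {x. P x y})"
    by (auto simp: inj_on_def)
  ultimately have "card {(x, y). P x y} = card (SIGMA y:UNIV. {x. P x y})"
    by (simp add: card_image)
  then show ?thesis by simp
qed

lemma pair_count:
  obtains Z C M where "(Z = 1 \<and> C = q+1) \<or> (Z = 2*q-1 \<and> C = q-1)"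
   "M = card {y. QQ (nm c + 1) (a^q*c^2+b) y + tr ((c*d^q+e)*y) + (nm d + tr (a*(d^q)^2) + tr f) = 0}"
   "card {(x,y). tr (a*x^2 + b*y^2 + c*x*y + d*x + e*y + f) = nm x + nm y} = M*Z + (q^2 - M)*C"
proof -
  obtain Z C where ZC: "(Z = 1 \<and> C = q+1) \<or> (Z = 2*q-1 \<and> C = q-1)"
    and cnt: "\<forall>t. t^q = t \<longrightarrow> card {y. QQ 1 a y = t} = (if t = 0 then Z else C)"
    using QQ_counts[of 1 a] by auto
  define S where "S y = QQ (nm c + 1) (a^q*c^2+b) y + tr ((c*d^q+e)*y) + (nm d + tr (a*(d^q)^2) + tr f)" for y
  define M where "M = card {y. S y = 0}"
  have kF: "(nm c + 1)^q = nm c + 1" by (simp add: frob nm_F)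
  have SF: "(S y)^q = S y" for y unfolding S_def using QQ_F[OF kF] by (simp add: frob nm_F tr_F)
  have inner: "card {x. tr (a*x^2 + b*y^2 + c*x*y + d*x + e*y + f) = nm x + nm y} = (if S y = 0 then Z else C)" for y
  proof -
    have "{x. tr (a*x^2 + b*y^2 + c*x*y + d*x + e*y + f) = nm x + nm y} =
          {x. QQ 1 a x + tr ((c*y+d)*x) + (nm y + tr (b*y^2) + tr (e*y) + tr f) = 0}"
      using eq_rewrite by blast
    then have "card {x. tr (a*x^2 + b*y^2 + c*x*y + d*x + e*y + f) = nm x + nm y} =
       card {x. QQ 1 a x = QQ 1 a (((c*y+d)/1)^q) + tr ((c*y+d)*((c*y+d)/1)^q) + (nm y + tr (b*y^2) + tr (e*y) + tr f)}"
      using shift_count[of 1 a "c*y+d" "nm y + tr (b*y^2) + tr (e*y) + tr f"] by simp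
    also have "\<dots> = card {x. QQ 1 a x = S y}" unfolding S_def by (simp only: div_by_1 s_formula)
    also have "\<dots> = (if S y = 0 then Z else C)" using cnt SF by simp
    finally show ?thesis .
  qed
  have "card {(x,y). tr (a*x^2 + b*y^2 + c*x*y + d*x + e*y + f) = nm x + nm y}
        = (\<Sum>y\<in>UNIV. (if S y = 0 then Z else C))"
    unfolding card_pairs_sum using inner by simp
  also have "\<dots> = (\<Sum>y\<in>{y. S y = 0}. Z) + (\<Sum>y\<in>UNIV - {y. S y = 0}. C)"
    by (simp add: sum.If_cases Compl_eq_Diff_UNIV)
  also have "\<dots> = M*Z + (q^2 - M)*C"
    unfolding M_def using cardK by (simp add: card_Diff_subset)
  finally have fin: "card {(x,y). tr (a*x^2 + b*y^2 + c*x*y + d*x + e*y + f) = nm x + nm y} = M*Z + (q^2 - M)*C" .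
  show ?thesis by (rule that[OF ZC _ fin]) (simp add: M_def S_def)
qed


lemma M_class:
  assumes nu: "nu^q = nu"
  shows "(k \<noteq> 0 \<longrightarrow> k^q = k \<longrightarrow> card {y. QQ k l y + tr (m*y) + nu = 0} \<in> {1, q-1, q+1, 2*q-1}) \<and>
         (k = 0 \<longrightarrow> card {y. QQ k l y + tr (m*y) + nu = 0} \<in> {0, q, 2*q} \<or>
            (l = 0 \<and> card {y. QQ k l y + tr (m*y) + nu = 0} = q^2))"
proof (intro conjI impI)
  assume "k \<noteq> 0" "k^q = k"
  then show "card {y. QQ k l y + tr (m*y) + nu = 0} \<in> {1, q-1, q+1, 2*q-1}"
    using nondeg_count nu by blast
next
  assume k: "k = 0"
  have "{y. QQ k l y + tr (m*y) + nu = 0} = {y. tr (l*y^2) + tr (m*y) + nu = 0}"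
    unfolding QQ_def k by simp
  then show "card {y. QQ k l y + tr (m*y) + nu = 0} \<in> {0, q, 2*q} \<or>
            (l = 0 \<and> card {y. QQ k l y + tr (m*y) + nu = 0} = q^2)"
    using degen_count[OF nu, of l m] by simp
qed

lemma as_root:
  assumes g: "g^q = g"
  shows "\<exists>v::'a. v^2 + v + g = 0"
proof -
  have "(1::'a) \<in> range tr" using range_tr by (simp add: Fq_iff)
  then obtain de where de: "tr de = 1" by (auto simp: image_iff)
  have deq: "de^q = de + 1"
  proof -
    have "de^q + (de + 1) = tr de + 1" unfolding tr_def by (simp add: add.assoc)
    also have "\<dots> = 0" using de by simp
    finally show ?thesis using eq_iff_add0[of "de^q" "de+1"] by simp
  qed
  define rho where "rho = de^2 + de"
  define ph where "ph = (\<lambda>x::'a. x^2 + x)"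
  have phadd: "ph (x + y) = ph x + ph y" for x y unfolding ph_def by (simp add: sq_add algebra_simps)
  have phF: "(ph x)^q = ph x" if "x^q = x" for x
    unfolding ph_def using that by (simp add: frob power_mult[symmetric] mult.commute power_mult)
  have rhoF: "rho^q = rho"
  proof -
    have "(de^2)^q = (de^q)^2" by (simp add: power_mult[symmetric] mult.commute)
    then have "rho^q = (de + 1)^2 + (de + 1)" unfolding rho_def using deq by (simp add: frob)
    also have "\<dots> = rho" unfolding rho_def by (simp add: sq_add algebra_simps two0)
    finally show ?thesis .
  qed
  have ph0: "ph x = 0 \<Longrightarrow> x = 0 \<or> x = 1" for x
  proof -
    assume "ph x = 0"
    then have "x * (x + 1) = 0" unfolding ph_def by (simp add: power2_eq_square algebra_simps)
    then have "x = 0 \<or> x + 1 = 0" by simp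
    then show ?thesis using eq_iff_add0[of x 1] by auto
  qed
  define A where "A = ph ` Fq"
  have AF: "A \<subseteq> Fq" unfolding A_def using phF by (auto simp: Fq_iff)
  have rho_notA: "rho \<notin> A"
  proof
    assume "rho \<in> A"
    then obtain al where al: "al^q = al" "rho = ph al" unfolding A_def by (auto simp: Fq_iff)
    have "ph (de + al) = rho + ph al" unfolding rho_def phadd by (simp add: ph_def)
    then have "ph (de + al) = 0" using al by simp
    then have "de + al = 0 \<or> de + al = 1" by (rule ph0)
    then have "de = al \<or> de = al + 1"
    proof
      assume "de + al = 0" then show ?thesis using eq_iff_add0[of de al] by simp
    next
      assume h: "de + al = 1"
      have "de + (al + 1) = (de + al) + 1" by (simp add: add.assoc)
      also have "\<dots> = 0" using h by simp
      finally show ?thesis using eq_iff_add0[of de "al + 1"] by simp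
    qed
    then have "de^q = de" using al(1) by (auto simp: frob)
    then have "tr de = 0" by (simp add: tr_zero_iff)
    then show False using de by simp
  qed
  have dis: "A \<inter> (\<lambda>x. x + rho) ` A = {}"
  proof (rule ccontr)
    assume "A \<inter> (\<lambda>x. x + rho) ` A \<noteq> {}"
    then obtain al be where ab: "al^q = al" "be^q = be" "ph al = ph be + rho"
      unfolding A_def by (auto simp: Fq_iff)
    have "ph (al + be) = ph al + ph be" by (rule phadd)
    also have "\<dots> = rho + (ph be + ph be)" using ab(3) by (simp add: ac_simps)
    also have "\<dots> = rho" by simp
    finally have r: "rho = ph (al + be)" by simp
    have abF: "al + be \<in> Fq" using ab(1,2) by (simp add: Fq_iff frob)
    have "rho \<in> A" unfolding A_def using r abF by (rule image_eqI)
    then show False using rho_notA by simp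
  qed
  have fib: "card {x \<in> Fq. ph x = a} \<le> 2" for a
  proof (cases "{x \<in> Fq. ph x = a} = {}")
    case True show ?thesis unfolding True by simp
  next
    case False
    then obtain x0 where x0: "x0 \<in> Fq" "ph x0 = a" by auto
    have "{x \<in> Fq. ph x = a} \<subseteq> {x0, x0 + 1}"
    proof
      fix x assume "x \<in> {x \<in> Fq. ph x = a}"
      then have "ph x = ph x0" using x0 by simp
      then have "ph (x + x0) = 0" using phadd[of x x0] by simp
      then have "x + x0 = 0 \<or> x + x0 = 1" by (rule ph0)
      then show "x \<in> {x0, x0 + 1}"
      proof
        assume "x + x0 = 0" then show ?thesis using eq_iff_add0[of x x0] by simp
      next
        assume h: "x + x0 = 1"
        have "x + (x0 + 1) = (x + x0) + 1" by (simp add: add.assoc)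
        also have "\<dots> = 0" using h by simp
        finally show ?thesis using eq_iff_add0[of x "x0 + 1"] by simp
      qed
    qed
    then have "card {x \<in> Fq. ph x = a} \<le> card {x0, x0 + 1}" by (intro card_mono) auto
    also have "\<dots> \<le> 2" by (simp add: card_insert_le_m1)
    finally show ?thesis .
  qed
  have "Fq = (\<Union>a\<in>A. {x \<in> Fq. ph x = a})" unfolding A_def by auto
  then have "card Fq \<le> (\<Sum>a\<in>A. card {x \<in> Fq. ph x = a})"
    using card_UN_le[of A "\<lambda>a. {x \<in> Fq. ph x = a}"] by simp
  also have "\<dots> \<le> (\<Sum>a\<in>A. 2)" by (rule sum_mono) (rule fib)
  finally have cA: "card Fq \<le> 2 * card A" by simp
  have cA2: "card ((\<lambda>x. x + rho) ` A) = card A" by (intro card_image inj_onI) simp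
  have sub: "A \<union> (\<lambda>x. x + rho) ` A \<subseteq> Fq" using AF rhoF by (auto simp: Fq_iff frob)
  have "card (A \<union> (\<lambda>x. x + rho) ` A) = 2 * card A" using dis cA2 by (simp add: card_Un_disjoint)
  then have eqF: "A \<union> (\<lambda>x. x + rho) ` A = Fq" using card_seteq[OF _ sub] cA by simp
  have "g \<in> Fq" using g by (simp add: Fq_iff)
  then have "g \<in> A \<or> g \<in> (\<lambda>x. x + rho) ` A" using eqF by blast
  then obtain v where v: "ph v = g"
  proof
    assume "g \<in> A" then show ?thesis using that unfolding A_def by blast
  next
    assume "g \<in> (\<lambda>x. x + rho) ` A"
    then obtain al where "g = ph al + rho" unfolding A_def by blast
    moreover have "ph (al + de) = ph al + rho" unfolding phadd rho_def by (simp add: ph_def)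
    ultimately show ?thesis using that by metis
  qed
  then have "v^2 + v + g = 0" unfolding ph_def by simp
  then show ?thesis by blast
qed

lemma line_exists:
  fixes a b c d e f :: 'a
  assumes b: "b = a^q * c^2"
  shows "contains_line (Qform a b c d e f)"
proof -
  obtain u where u: "a*u^2 + u + a^q = 0"
  proof (cases "a = 0")
    case True then show ?thesis using that[of 0] q_pos by simp
  next
    case False
    obtain v where v: "v^2 + v + nm a = 0" using as_root[OF nm_F] by blast
    have "a*(v/a)^2 + v/a + a^q = (v^2 + v + nm a)/a"
      using False by (simp add: nm_def field_simps power2_eq_square)
    then show ?thesis using that[of "v/a"] v by simp
  qed
  define p where "p = c*u"
  have p: "a*p^2 + c*p + b = 0"
  proof -
    have "a*p^2 + c*p + b = c^2 * (a*u^2 + u + a^q)" unfolding p_def b by (simp add: algebra_simps power2_eq_square)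
    then show ?thesis using u by simp
  qed
  define u0 :: "'a vec4" where "u0 = (1, 0, 0, f)"
  define w :: "'a vec4" where "w = (0, p, 1, d*p + e)"
  have "u0 \<noteq> zero4" unfolding u0_def zero4_def by simp
  moreover have "\<forall>k. w \<noteq> smul k u0" unfolding w_def u0_def by simp
  moreover have "\<forall>s t. Qform a b c d e f (vadd (smul s u0) (smul t w)) = 0"
  proof (intro allI)
    fix s t :: 'a
    have "Qform a b c d e f (vadd (smul s u0) (smul t w)) = t^2 * (a*p^2 + c*p + b)"
      unfolding u0_def w_def Qform_def by (simp add: algebra_simps power2_eq_square)
    then show "Qform a b c d e f (vadd (smul s u0) (smul t w)) = 0" using p by simp
  qed
  ultimately show ?thesis unfolding contains_line_def by blast
qed

lemma cone_c0:
  fixes a b c d e f :: 'a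
  assumes "quadratic_cone (Qform a b c d e f)"
  shows "c = 0"
proof (rule ccontr)
  assume c: "c \<noteq> 0"
  from assms obtain V where V: "singular_pt (Qform a b c d e f) V" unfolding quadratic_cone_def by blast
  obtain J X Y Z where JV: "V = (J, X, Y, Z)" by (cases V) auto
  have nz: "V \<noteq> zero4" and pol: "\<forall>w. polar (Qform a b c d e f) V w = 0"
    using V unfolding singular_pt_def by auto
  have p1: "polar (Qform a b c d e f) V (0,0,0,1) = - J"
    unfolding JV polar_def Qform_def by (simp add: algebra_simps power2_eq_square)
  have J: "J = 0" using spec[OF pol, of "(0,0,0,1)"] p1 by simp
  have p2: "polar (Qform a b c d e f) V (0,1,0,0) = 2*a*X + c*Y + d*J"
    unfolding JV polar_def Qform_def by (simp add: algebra_simps power2_eq_square)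
  have p3: "polar (Qform a b c d e f) V (0,0,1,0) = 2*b*Y + c*X + e*J"
    unfolding JV polar_def Qform_def by (simp add: algebra_simps power2_eq_square)
  have p4: "polar (Qform a b c d e f) V (1,0,0,0) = d*X + e*Y + 2*f*J - Z"
    unfolding JV polar_def Qform_def by (simp add: algebra_simps power2_eq_square)
  have "c*Y = 0" using spec[OF pol, of "(0,1,0,0)"] p2 J two0 by simp
  then have Y: "Y = 0" using c by simp
  have "c*X = 0" using spec[OF pol, of "(0,0,1,0)"] p3 J two0 by simp
  then have X: "X = 0" using c by simp
  have "Z = 0" using spec[OF pol, of "(1,0,0,0)"] p4 J X Y two0 by simp
  then show False using nz JV J X Y unfolding zero4_def by simp
qed

lemma N_pairs:
  fixes a b c d e f :: 'a
  shows "card {(x, y, z). z ^ q + z = x ^ (q + 1) + y ^ (q + 1) \<and> z = a*x^2 + b*y^2 + c*x*y + d*x + e*y + f}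
   = card {(x,y). tr (a*x^2 + b*y^2 + c*x*y + d*x + e*y + f) = nm x + nm y}"
proof -
  have nmq: "x^(q+1) = nm x" for x :: 'a unfolding nm_def by (simp add: mult.commute)
  have "{(x, y, z). z ^ q + z = x ^ (q + 1) + y ^ (q + 1) \<and> z = a*x^2 + b*y^2 + c*x*y + d*x + e*y + f}
     = (\<lambda>(x,y). (x, y, a*x^2 + b*y^2 + c*x*y + d*x + e*y + f)) `
         {(x,y). tr (a*x^2 + b*y^2 + c*x*y + d*x + e*y + f) = nm x + nm y}"
    unfolding tr_def nmq by auto
  moreover have "inj_on (\<lambda>(x,y). (x, y, a*x^2 + b*y^2 + c*x*y + d*x + e*y + f))
         {(x,y). tr (a*x^2 + b*y^2 + c*x*y + d*x + e*y + f) = nm x + nm y}"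
    by (auto simp: inj_on_def)
  ultimately show ?thesis by (simp add: card_image)
qed

end

theorem lemma3:
  fixes a b c d e f :: "'a::{field,finite}" and q h :: nat
  assumes "q = 2 ^ h"
    and "card (UNIV :: 'a set) = q ^ 2"
    and "irreducible_quadric (Qform a b c d e f)"
  defines "N \<equiv> card {(x, y, z). z ^ q + z = x ^ (q + 1) + y ^ (q + 1) \<and>
                   z = a*x^2 + b*y^2 + c*x*y + d*x + e*y + f}"
  shows "(elliptic_quadric (Qform a b c d e f) \<longrightarrow>
            N \<in> {q^3 - q^2, q^3 - q^2 + q, q^3 - q, q^3, q^3 + q, q^3 + q^2 - q, q^3 + q^2})
       \<and> (quadratic_cone (Qform a b c d e f) \<longrightarrow>
            N \<in> {q^3 - q^2 + q, q^3 - q, q^3 + q, q^3 + q^2 - q})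
       \<and> (hyperbolic_quadric (Qform a b c d e f) \<longrightarrow>
            N \<in> {q^2, q^3 - q^2, q^3 - q^2 + q, q^3 - q, q^3, q^3 + q, q^3 + q^2 - q, q^3 + q^2, 2*q^3 - q^2})"
proof -
  interpret G: gfq q "TYPE('a)"
    by unfold_locales (use assms(1,2) in auto)
  obtain Z C M where ZC: "(Z = 1 \<and> C = q+1) \<or> (Z = 2*q-1 \<and> C = q-1)"
    and Mdef: "M = card {y. G.QQ (G.nm c + 1) (a^q*c^2+b) y + G.tr ((c*d^q+e)*y) + (G.nm d + G.tr (a*(d^q)^2) + G.tr f) = 0}"
    and cnt: "card {(x,y). G.tr (a*x^2 + b*y^2 + c*x*y + d*x + e*y + f) = G.nm x + G.nm y} = M*Z + (q^2 - M)*C"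
    by (rule G.pair_count)
  have N: "N = M*Z + (q^2 - M)*C" unfolding N_def using G.N_pairs[of a b c d e f] cnt by simp
  have "M \<le> card (UNIV::'a set)" unfolding Mdef by (rule card_mono) auto
  then have Mle: "M \<le> q^2" using assms(2) by simp
  have q2: "q \<ge> 2" by (rule G.q_ge2)
  have nuF: "(G.nm d + G.tr (a*(d^q)^2) + G.tr f)^q = G.nm d + G.tr (a*(d^q)^2) + G.tr f"
    by (simp add: G.frob G.nm_F G.tr_F)
  have kF: "(G.nm c + 1)^q = G.nm c + 1" by (simp add: G.frob G.nm_F)
  note MC = G.M_class[OF nuF, of "G.nm c + 1" "a^q*c^2+b" "c*d^q+e"]
  have M_gen: "M \<in> {0, 1, q-1, q, q+1, 2*q-1, 2*q} \<or> (a^q*c^2+b = 0 \<and> M = q^2)"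
  proof (cases "G.nm c + 1 = 0")
    case True then show ?thesis using MC Mdef by auto
  next
    case False then show ?thesis using MC Mdef kF by auto
  qed
  have E: "elliptic_quadric (Qform a b c d e f) \<longrightarrow>
            N \<in> {q^3 - q^2, q^3 - q^2 + q, q^3 - q, q^3, q^3 + q, q^3 + q^2 - q, q^3 + q^2}"
  proof
    assume ell: "elliptic_quadric (Qform a b c d e f)"
    have "a^q*c^2+b \<noteq> 0"
    proof
      assume "a^q*c^2+b = 0"
      then have "b = a^q*c^2" using G.eq_iff_add0[of b "a^q*c^2"] by (simp add: add.commute)
      then have "contains_line (Qform a b c d e f)" by (rule G.line_exists)
      then show False using ell unfolding elliptic_quadric_def by simp
    qed
    then have "M \<in> {0, 1, q-1, q, q+1, 2*q-1, 2*q}" using M_gen by blast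
    then show "N \<in> {q^3 - q^2, q^3 - q^2 + q, q^3 - q, q^3, q^3 + q, q^3 + q^2 - q, q^3 + q^2}"
      by (rule final_ell[OF q2 Mle ZC N])
  qed
  have Co: "quadratic_cone (Qform a b c d e f) \<longrightarrow>
            N \<in> {q^3 - q^2 + q, q^3 - q, q^3 + q, q^3 + q^2 - q}"
  proof
    assume "quadratic_cone (Qform a b c d e f)"
    then have "c = 0" by (rule G.cone_c0)
    then have k1: "G.nm c + 1 = 1" using G.q_pos by (simp add: G.nm_def)
    then have "M \<in> {1, q-1, q+1, 2*q-1}" using MC Mdef by simp
    then show "N \<in> {q^3 - q^2 + q, q^3 - q, q^3 + q, q^3 + q^2 - q}"
      by (rule final_cone[OF q2 Mle ZC N])
  qed
  have H: "hyperbolic_quadric (Qform a b c d e f) \<longrightarrow>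
            N \<in> {q^2, q^3 - q^2, q^3 - q^2 + q, q^3 - q, q^3, q^3 + q, q^3 + q^2 - q, q^3 + q^2, 2*q^3 - q^2}"
  proof
    have "M \<in> {0, 1, q-1, q, q+1, 2*q-1, 2*q, q^2}" using M_gen by blast
    then show "N \<in> {q^2, q^3 - q^2, q^3 - q^2 + q, q^3 - q, q^3, q^3 + q, q^3 + q^2 - q, q^3 + q^2, 2*q^3 - q^2}"
      by (rule final_hyp[OF q2 Mle ZC N])
  qed
  show ?thesis using E Co H by blast
qed

end
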